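(* Let $f:\mathbb{R}^d\to\mathbb{R}$ be differentiable with $L$-Lipschitz gradient. Consider single-step SGD iterations (as defined in the context) with constant learning rate $\alpha\le\frac{1}{6L}$ satisfying elastic consistency with constant $B$. Then for every $t\ge0$, $$\mathbb{E}[f(\vec x_{t+1})]\le\mathbb{E}[f(\vec x_t)]-\frac{\alpha}{4}\mathbb{E}\|\nabla f(\vec x_t)\|^2+\frac{\alpha^3B^2L^2}{2}+\frac{3L\alpha^2\sigma^2}{2}+\frac{3L^3\alpha^4B^2}{2}.$$
   Context: All random objects live on a probability space with a filtration $(\mathcal F_t)_{t\ge0}$. Single-step SGD iterations: $\vec x_0\in\mathbb{R}^d$ is deterministic. At each iteration $t\ge0$ some processor $i=i_t$ (chosen independently of the algorithm's randomness) holds a view $\vec v_t^{i}$. The vectors $\vec x_t,\vec v_t^{i}$ are $\mathcal F_t$-measurable, and the processor computes an $\mathcal F_{t+1}$-measurable stochastic gradient $\tilde G(\vec v_t^{i})$ with $\mathbb{E}[\tilde G(\vec v_t^{i})\mid\mathcal F_t]=\nabla f(\vec v_t^{i})$ and $\mathbb{E}[\|\tilde G(\vec v_t^{i})-\nabla f(\vec v_t^{i})\|^2\mid\mathcal F_t]\le\sigma^2$. Update: $\vec x_{t+1}=\vec x_t-\alpha\tilde G(\vec v_t^{i})$. Elastic consistency with constant $B>0$: $\mathbb{E}\|\vec x_t-\vec v_t^{i}\|^2\le\alpha^2B^2$ for every $t$ and the processor $i$ acting at $t$. *)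

theory Defs
  imports "HOL-Probability.Probability"
begin
end

theory Submission imports Defs begin

lemma descent:
  fixes f :: "'v::euclidean_space \<Rightarrow> real" and grad :: "'v \<Rightarrow> 'v"
  assumes grad_f: "\<And>y. (f has_derivative (\<lambda>h. grad y \<bullet> h)) (at y)"
    and lipschitz: "\<And>y z. norm (grad y - grad z) \<le> L * norm (y - z)"
  shows "f y \<le> f x + grad x \<bullet> (y - x) + L / 2 * (norm (y - x))\<^sup>2"
proof -
  define d where "d = y - x"
  define \<phi> where "\<phi> s = f (x + s *\<^sub>R d) - s * (grad x \<bullet> d) - L / 2 * s\<^sup>2 * (norm d)\<^sup>2" for s :: real
  have der: "(\<phi> has_real_derivative ((grad (x + s *\<^sub>R d) - grad x) \<bullet> d - L * s * (norm d)\<^sup>2)) (at s)" for s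
  proof -
    have "((\<lambda>s. x + s *\<^sub>R d) has_derivative (\<lambda>h. h *\<^sub>R d)) (at s)"
      by (auto intro!: derivative_eq_intros)
    from has_derivative_compose[OF this grad_f]
    have "((\<lambda>s. f (x + s *\<^sub>R d)) has_derivative (\<lambda>h. grad (x + s *\<^sub>R d) \<bullet> (h *\<^sub>R d))) (at s)" .
    hence "((\<lambda>s. f (x + s *\<^sub>R d)) has_real_derivative (grad (x + s *\<^sub>R d) \<bullet> d)) (at s)"
      by (rule has_derivative_imp_has_field_derivative) (simp add: mult.commute)
    then show ?thesis unfolding \<phi>_def
      by (auto intro!: derivative_eq_intros simp: algebra_simps power2_eq_square)
  qed
  have nonpos: "(grad (x + s *\<^sub>R d) - grad x) \<bullet> d - L * s * (norm d)\<^sup>2 \<le> 0" if "0 \<le> s" for s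
  proof -
    have "(grad (x + s *\<^sub>R d) - grad x) \<bullet> d \<le> norm (grad (x + s *\<^sub>R d) - grad x) * norm d"
      by (rule norm_cauchy_schwarz)
    also have "\<dots> \<le> L * norm (s *\<^sub>R d) * norm d"
      using lipschitz[of "x + s *\<^sub>R d" x] by (simp add: mult_right_mono)
    also have "\<dots> = L * s * (norm d)\<^sup>2" using that by (simp add: power2_eq_square)
    finally show ?thesis by simp
  qed
  have "\<phi> 1 \<le> \<phi> 0"
  proof (rule DERIV_nonpos_imp_nonincreasing[of 0 1])
    fix s :: real assume "0 \<le> s" "s \<le> 1"
    then show "\<exists>y. DERIV \<phi> s :> y \<and> y \<le> 0" using der[of s] nonpos[of s] by blast
  qed simp
  then show ?thesis unfolding \<phi>_def d_def by simp
qed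

theorem mainTheorem4:
  fixes M :: "'a measure"
    and F :: "nat \<Rightarrow> 'a measure"
    and f :: "'v::euclidean_space \<Rightarrow> real"
    and grad :: "'v \<Rightarrow> 'v"
    and x v g :: "nat \<Rightarrow> 'a \<Rightarrow> 'v"
    and x0 :: 'v
    and L \<alpha> B \<sigma> :: real
  assumes prob: "prob_space M"
    and filt_sub: "\<And>t. sigma_finite_subalgebra M (F t)"
    and filt_mono: "\<And>s t. s \<le> t \<Longrightarrow> sets (F s) \<subseteq> sets (F t)"
    and grad_f: "\<And>y. (f has_derivative (\<lambda>h. grad y \<bullet> h)) (at y)"
    and L_pos: "L > 0"
    and lipschitz: "\<And>y z. norm (grad y - grad z) \<le> L * norm (y - z)"
    and alpha_pos: "\<alpha> > 0"
    and alpha_le: "\<alpha> \<le> 1 / (6 * L)"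
    and B_pos: "B > 0"
    and x_init: "\<And>\<omega>. \<omega> \<in> space M \<Longrightarrow> x 0 \<omega> = x0"
    and x_meas: "\<And>t. x t \<in> borel_measurable (F t)"
    and v_meas: "\<And>t. v t \<in> borel_measurable (F t)"
    and g_meas: "\<And>t. g t \<in> borel_measurable (F (Suc t))"
    and update: "\<And>t \<omega>. \<omega> \<in> space M \<Longrightarrow> x (Suc t) \<omega> = x t \<omega> - \<alpha> *\<^sub>R g t \<omega>"
    and g_int: "\<And>t b. integrable M (\<lambda>\<omega>. g t \<omega> \<bullet> b)"
    and g_unbiased: "\<And>t b. AE \<omega> in M.
        real_cond_exp M (F t) (\<lambda>\<omega>. g t \<omega> \<bullet> b) \<omega> = grad (v t \<omega>) \<bullet> b"
    and noise_int: "\<And>t. integrable M (\<lambda>\<omega>. (norm (g t \<omega> - grad (v t \<omega>)))\<^sup>2)"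
    and g_var: "\<And>t. AE \<omega> in M.
        real_cond_exp M (F t) (\<lambda>\<omega>. (norm (g t \<omega> - grad (v t \<omega>)))\<^sup>2) \<omega> \<le> \<sigma>\<^sup>2"
    and elastic_int: "\<And>t. integrable M (\<lambda>\<omega>. (norm (x t \<omega> - v t \<omega>))\<^sup>2)"
    and elastic: "\<And>t. (\<integral>\<omega>. (norm (x t \<omega> - v t \<omega>))\<^sup>2 \<partial>M) \<le> \<alpha>\<^sup>2 * B\<^sup>2"
    and f_int: "\<And>t. integrable M (\<lambda>\<omega>. f (x t \<omega>))"
    and gradx_int: "\<And>t. integrable M (\<lambda>\<omega>. (norm (grad (x t \<omega>)))\<^sup>2)"
  shows "(\<integral>\<omega>. f (x (Suc t) \<omega>) \<partial>M)
    \<le> (\<integral>\<omega>. f (x t \<omega>) \<partial>M)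
       - \<alpha> / 4 * (\<integral>\<omega>. (norm (grad (x t \<omega>)))\<^sup>2 \<partial>M)
       + \<alpha> ^ 3 * B\<^sup>2 * L\<^sup>2 / 2
       + 3 * L * \<alpha>\<^sup>2 * \<sigma>\<^sup>2 / 2
       + 3 * L ^ 3 * \<alpha> ^ 4 * B\<^sup>2 / 2"

proof -
  interpret P: prob_space M by (rule prob)
  interpret S: sigma_finite_subalgebra M "F t" by (rule filt_sub)
  have subS: "subalgebra M (F (Suc t))" using filt_sub[of "Suc t"] sigma_finite_subalgebra.subalg by blast
  have gradc: "continuous_on UNIV grad"
    by (rule lipschitz_on_continuous_on[of L]) (use L_pos lipschitz in \<open>auto simp: lipschitz_on_def dist_norm\<close>)
  have gradB[measurable]: "grad \<in> borel_measurable borel" by (rule borel_measurable_continuous_onI[OF gradc])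
  have fc: "continuous_on UNIV f"
    using grad_f by (meson continuous_at_imp_continuous_on has_derivative_continuous)
  have [measurable]: "f \<in> borel_measurable borel" by (rule borel_measurable_continuous_onI[OF fc])
  have xF[measurable]: "x t \<in> borel_measurable (F t)" by (rule x_meas)
  have xM[measurable]: "x t \<in> borel_measurable M" by (rule measurable_from_subalg[OF S.subalg x_meas])
  have vM[measurable]: "v t \<in> borel_measurable M" by (rule measurable_from_subalg[OF S.subalg v_meas])
  have gM[measurable]: "g t \<in> borel_measurable M" by (rule measurable_from_subalg[OF subS g_meas])
  define X where "X = x t"
  define V where "V = v t"
  define G where "G = g t"
  note defs = X_def V_def G_def
  have gxM[measurable]: "(\<lambda>\<omega>. grad (X \<omega>)) \<in> borel_measurable M" unfolding defs by (rule measurable_compose[OF xM gradB])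
  have gvM[measurable]: "(\<lambda>\<omega>. grad (V \<omega>)) \<in> borel_measurable M" unfolding defs by (rule measurable_compose[OF vM gradB])
  have GM[measurable]: "G \<in> borel_measurable M" unfolding defs by (rule gM)
  have XM[measurable]: "X \<in> borel_measurable M" unfolding defs by (rule xM)
  have VM[measurable]: "V \<in> borel_measurable M" unfolding defs by (rule vM)
  have p1: "f (x (Suc t) \<omega>) \<le> f (X \<omega>) - \<alpha> * (grad (X \<omega>) \<bullet> G \<omega>) + L * \<alpha>\<^sup>2 / 2 * (norm (G \<omega>))\<^sup>2"
    if "\<omega> \<in> space M" for \<omega>
  proof -
    have "f (x (Suc t) \<omega>) \<le> f (X \<omega>) + grad (X \<omega>) \<bullet> (x (Suc t) \<omega> - X \<omega>) + L / 2 * (norm (x (Suc t) \<omega> - X \<omega>))\<^sup>2"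
      by (rule descent[OF grad_f lipschitz])
    also have "x (Suc t) \<omega> - X \<omega> = - (\<alpha> *\<^sub>R G \<omega>)" using update[OF that] unfolding defs by simp
    finally show ?thesis using alpha_pos by (simp add: power_mult_distrib algebra_simps)
  qed
  have lipXV: "norm (grad (V \<omega>) - grad (X \<omega>)) \<le> L * norm (X \<omega> - V \<omega>)" for \<omega>
    using lipschitz[of "V \<omega>" "X \<omega>"] by (simp add: norm_minus_commute)
  have lipXV2: "(norm (grad (V \<omega>) - grad (X \<omega>)))\<^sup>2 \<le> L\<^sup>2 * (norm (X \<omega> - V \<omega>))\<^sup>2" for \<omega>
    using power_mono[OF lipXV[of \<omega>], of 2] by (simp add: power_mult_distrib)
  have p2: "(norm (G \<omega>))\<^sup>2 \<le> 3 * (norm (G \<omega> - grad (V \<omega>)))\<^sup>2 + 3 * (norm (grad (X \<omega>)))\<^sup>2 + 3 * (L\<^sup>2 * (norm (X \<omega> - V \<omega>))\<^sup>2)" for \<omega>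
  proof -
    define a where "a = norm (G \<omega> - grad (V \<omega>))"
    define b where "b = norm (grad (X \<omega>))"
    define c where "c = norm (grad (V \<omega>) - grad (X \<omega>))"
    have "G \<omega> = (G \<omega> - grad (V \<omega>)) + grad (X \<omega>) + (grad (V \<omega>) - grad (X \<omega>))" by simp
    hence "norm (G \<omega>) \<le> a + b + c" unfolding a_def b_def c_def
      by (metis norm_triangle_le order_refl add_mono)
    hence "(norm (G \<omega>))\<^sup>2 \<le> (a + b + c)\<^sup>2" by (simp add: power_mono)
    also have "\<dots> \<le> 3 * a\<^sup>2 + 3 * b\<^sup>2 + 3 * c\<^sup>2"
    proof -
      have "3 * a\<^sup>2 + 3 * b\<^sup>2 + 3 * c\<^sup>2 - (a + b + c)\<^sup>2 = (a - b)\<^sup>2 + (b - c)\<^sup>2 + (a - c)\<^sup>2"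
        by (simp add: power2_eq_square algebra_simps)
      moreover have "0 \<le> (a - b)\<^sup>2 + (b - c)\<^sup>2 + (a - c)\<^sup>2" by simp
      ultimately show ?thesis by linarith
    qed
    finally show ?thesis using lipXV2[of \<omega>] unfolding a_def b_def c_def by linarith
  qed
  have p3: "grad (X \<omega>) \<bullet> grad (V \<omega>) \<ge> (norm (grad (X \<omega>)))\<^sup>2 / 2 - L\<^sup>2 * (norm (X \<omega> - V \<omega>))\<^sup>2 / 2" for \<omega>
  proof -
    define b where "b = norm (grad (X \<omega>))"
    define c where "c = norm (grad (V \<omega>) - grad (X \<omega>))"
    have "grad (X \<omega>) \<bullet> grad (V \<omega>) = b\<^sup>2 + grad (X \<omega>) \<bullet> (grad (V \<omega>) - grad (X \<omega>))"
      unfolding b_def by (simp add: inner_diff_right power2_norm_eq_inner)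
    moreover have "grad (X \<omega>) \<bullet> (grad (V \<omega>) - grad (X \<omega>)) \<ge> - (b * c)"
      unfolding b_def c_def using Cauchy_Schwarz_ineq2[of "grad (X \<omega>)" "grad (V \<omega>) - grad (X \<omega>)"] by linarith
    moreover have "b * c \<le> b\<^sup>2 / 2 + c\<^sup>2 / 2"
    proof -
      have "b\<^sup>2 / 2 + c\<^sup>2 / 2 - b * c = (b - c)\<^sup>2 / 2" by (simp add: power2_eq_square algebra_simps)
      moreover have "0 \<le> (b - c)\<^sup>2 / 2" by simp
      ultimately show ?thesis by linarith
    qed
    ultimately show ?thesis using lipXV2[of \<omega>] unfolding b_def c_def by linarith
  qed
  have i_n: "integrable M (\<lambda>\<omega>. (norm (G \<omega> - grad (V \<omega>)))\<^sup>2)" using noise_int unfolding defs .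
  have i_gx: "integrable M (\<lambda>\<omega>. (norm (grad (X \<omega>)))\<^sup>2)" using gradx_int unfolding defs .
  have i_xv: "integrable M (\<lambda>\<omega>. (norm (X \<omega> - V \<omega>))\<^sup>2)" using elastic_int unfolding defs .
  have i_G: "integrable M (\<lambda>\<omega>. (norm (G \<omega>))\<^sup>2)"
  proof (rule Bochner_Integration.integrable_bound[where f="\<lambda>\<omega>. 3 * (norm (G \<omega> - grad (V \<omega>)))\<^sup>2 + 3 * (norm (grad (X \<omega>)))\<^sup>2 + 3 * (L\<^sup>2 * (norm (X \<omega> - V \<omega>))\<^sup>2)"])
    show "integrable M (\<lambda>\<omega>. 3 * (norm (G \<omega> - grad (V \<omega>)))\<^sup>2 + 3 * (norm (grad (X \<omega>)))\<^sup>2 + 3 * (L\<^sup>2 * (norm (X \<omega> - V \<omega>))\<^sup>2))"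
      by (intro Bochner_Integration.integrable_add integrable_mult_right i_n i_gx i_xv)
    show "(\<lambda>\<omega>. (norm (G \<omega>))\<^sup>2) \<in> borel_measurable M"
      by (rule borel_measurable_power, rule measurable_compose[OF GM borel_measurable_norm])
    show "AE \<omega> in M. norm ((norm (G \<omega>))\<^sup>2) \<le> norm (3 * (norm (G \<omega> - grad (V \<omega>)))\<^sup>2 + 3 * (norm (grad (X \<omega>)))\<^sup>2 + 3 * (L\<^sup>2 * (norm (X \<omega> - V \<omega>))\<^sup>2))"
    proof (rule AE_I2)
      fix \<omega>
      have "0 \<le> 3 * (norm (G \<omega> - grad (V \<omega>)))\<^sup>2 + 3 * (norm (grad (X \<omega>)))\<^sup>2 + 3 * (L\<^sup>2 * (norm (X \<omega> - V \<omega>))\<^sup>2)"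
        by simp
      then show "norm ((norm (G \<omega>))\<^sup>2) \<le> norm (3 * (norm (G \<omega> - grad (V \<omega>)))\<^sup>2 + 3 * (norm (grad (X \<omega>)))\<^sup>2 + 3 * (L\<^sup>2 * (norm (X \<omega> - V \<omega>))\<^sup>2))"
        using p2[of \<omega>] by (simp only: real_norm_def abs_of_nonneg zero_le_power2)
    qed
  qed
  have i_gv: "integrable M (\<lambda>\<omega>. (norm (grad (V \<omega>)))\<^sup>2)"
  proof (rule Bochner_Integration.integrable_bound[where f="\<lambda>\<omega>. 2 * (norm (grad (X \<omega>)))\<^sup>2 + 2 * (L\<^sup>2 * (norm (X \<omega> - V \<omega>))\<^sup>2)"])
    show "integrable M (\<lambda>\<omega>. 2 * (norm (grad (X \<omega>)))\<^sup>2 + 2 * (L\<^sup>2 * (norm (X \<omega> - V \<omega>))\<^sup>2))"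
      by (intro Bochner_Integration.integrable_add integrable_mult_right i_gx i_xv)
    show "AE \<omega> in M. norm ((norm (grad (V \<omega>)))\<^sup>2) \<le> norm (2 * (norm (grad (X \<omega>)))\<^sup>2 + 2 * (L\<^sup>2 * (norm (X \<omega> - V \<omega>))\<^sup>2))"
    proof (rule AE_I2)
      fix \<omega>
      have "norm (grad (V \<omega>)) \<le> norm (grad (X \<omega>)) + norm (grad (V \<omega>) - grad (X \<omega>))"
        by (metis add_diff_cancel_left' diff_add_cancel norm_triangle_ineq)
      hence "(norm (grad (V \<omega>)))\<^sup>2 \<le> (norm (grad (X \<omega>)) + norm (grad (V \<omega>) - grad (X \<omega>)))\<^sup>2"
        by (simp add: power_mono)
      also have "\<dots> \<le> 2 * (norm (grad (X \<omega>)))\<^sup>2 + 2 * (norm (grad (V \<omega>) - grad (X \<omega>)))\<^sup>2"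
      proof -
        have "2 * (norm (grad (X \<omega>)))\<^sup>2 + 2 * (norm (grad (V \<omega>) - grad (X \<omega>)))\<^sup>2 - (norm (grad (X \<omega>)) + norm (grad (V \<omega>) - grad (X \<omega>)))\<^sup>2 = (norm (grad (X \<omega>)) - norm (grad (V \<omega>) - grad (X \<omega>)))\<^sup>2"
          by (simp add: power2_eq_square algebra_simps)
        moreover have "0 \<le> (norm (grad (X \<omega>)) - norm (grad (V \<omega>) - grad (X \<omega>)))\<^sup>2" by simp
        ultimately show ?thesis by linarith
      qed
      finally show "norm ((norm (grad (V \<omega>)))\<^sup>2) \<le> norm (2 * (norm (grad (X \<omega>)))\<^sup>2 + 2 * (L\<^sup>2 * (norm (X \<omega> - V \<omega>))\<^sup>2))"
        using lipXV2[of \<omega>] by simp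
    qed
  qed (rule borel_measurable_power, rule measurable_compose[OF gvM borel_measurable_norm])
  have i_prod: "integrable M (\<lambda>\<omega>. (a \<omega> \<bullet> b) * (c \<omega> \<bullet> b))"
    if "integrable M (\<lambda>\<omega>. (norm (a \<omega>))\<^sup>2)" "integrable M (\<lambda>\<omega>. (norm (c \<omega>))\<^sup>2)"
       "a \<in> borel_measurable M" "c \<in> borel_measurable M" "norm b \<le> 1" for a c :: "'a \<Rightarrow> 'v" and b
  proof (rule Bochner_Integration.integrable_bound[where f="\<lambda>\<omega>. (norm (a \<omega>))\<^sup>2 + (norm (c \<omega>))\<^sup>2"])
    show "integrable M (\<lambda>\<omega>. (norm (a \<omega>))\<^sup>2 + (norm (c \<omega>))\<^sup>2)" using that by auto
    show "(\<lambda>\<omega>. (a \<omega> \<bullet> b) * (c \<omega> \<bullet> b)) \<in> borel_measurable M" by (rule borel_measurable_times[OF borel_measurable_inner[OF that(3) borel_measurable_const] borel_measurable_inner[OF that(4) borel_measurable_const]])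
    show "AE \<omega> in M. norm ((a \<omega> \<bullet> b) * (c \<omega> \<bullet> b)) \<le> norm ((norm (a \<omega>))\<^sup>2 + (norm (c \<omega>))\<^sup>2)"
    proof
      fix \<omega>
      have h1: "\<bar>a \<omega> \<bullet> b\<bar> \<le> norm (a \<omega>)"
        using Cauchy_Schwarz_ineq2[of "a \<omega>" b] mult_left_le[OF that(5) norm_ge_zero[of "a \<omega>"]] by linarith
      have h2: "\<bar>c \<omega> \<bullet> b\<bar> \<le> norm (c \<omega>)"
        using Cauchy_Schwarz_ineq2[of "c \<omega>" b] mult_left_le[OF that(5) norm_ge_zero[of "c \<omega>"]] by linarith
      have "\<bar>(a \<omega> \<bullet> b) * (c \<omega> \<bullet> b)\<bar> \<le> norm (a \<omega>) * norm (c \<omega>)"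
        unfolding abs_mult by (rule mult_mono[OF h1 h2]) auto
      also have "\<dots> \<le> (norm (a \<omega>))\<^sup>2 + (norm (c \<omega>))\<^sup>2"
      proof -
        have "(norm (a \<omega>))\<^sup>2 + (norm (c \<omega>))\<^sup>2 - norm (a \<omega>) * norm (c \<omega>) = (norm (a \<omega>) - norm (c \<omega>))\<^sup>2 + norm (a \<omega>) * norm (c \<omega>)"
          by (simp add: power2_eq_square algebra_simps)
        moreover have "0 \<le> (norm (a \<omega>) - norm (c \<omega>))\<^sup>2 + norm (a \<omega>) * norm (c \<omega>)" by simp
        ultimately show ?thesis by linarith
      qed
      finally show "norm ((a \<omega> \<bullet> b) * (c \<omega> \<bullet> b)) \<le> norm ((norm (a \<omega>))\<^sup>2 + (norm (c \<omega>))\<^sup>2)" by simp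
    qed
  qed
  have i_xG: "integrable M (\<lambda>\<omega>. grad (X \<omega>) \<bullet> G \<omega>)"
    by (subst euclidean_inner, rule Bochner_Integration.integrable_sum)
       (rule i_prod[OF i_gx i_G gxM GM], simp)
  have i_xv2: "integrable M (\<lambda>\<omega>. grad (X \<omega>) \<bullet> grad (V \<omega>))"
    by (subst euclidean_inner, rule Bochner_Integration.integrable_sum)
       (rule i_prod[OF i_gx i_gv gxM gvM], simp)
  have comp: "(\<integral>\<omega>. (grad (X \<omega>) \<bullet> b) * (G \<omega> \<bullet> b) \<partial>M) = (\<integral>\<omega>. (grad (X \<omega>) \<bullet> b) * (grad (V \<omega>) \<bullet> b) \<partial>M)"
    if b: "b \<in> Basis" for b
  proof -
    have mF: "(\<lambda>\<omega>. grad (X \<omega>) \<bullet> b) \<in> borel_measurable (F t)" unfolding defs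
      by (rule borel_measurable_inner[OF measurable_compose[OF xF gradB] borel_measurable_const])
    have "(\<integral>\<omega>. (grad (X \<omega>) \<bullet> b) * (G \<omega> \<bullet> b) \<partial>M) = (\<integral>\<omega>. (grad (X \<omega>) \<bullet> b) * real_cond_exp M (F t) (\<lambda>\<omega>. G \<omega> \<bullet> b) \<omega> \<partial>M)"
      by (rule S.real_cond_exp_intg(2)[symmetric]) (use i_prod[OF i_gx i_G gxM GM, of b] b mF in auto)
    also have "\<dots> = (\<integral>\<omega>. (grad (X \<omega>) \<bullet> b) * (grad (V \<omega>) \<bullet> b) \<partial>M)"
    proof (rule integral_cong_AE)
      show "(\<lambda>\<omega>. (grad (X \<omega>) \<bullet> b) * real_cond_exp M (F t) (\<lambda>\<omega>. G \<omega> \<bullet> b) \<omega>) \<in> borel_measurable M"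
        by (rule borel_measurable_times[OF borel_measurable_inner[OF gxM borel_measurable_const] borel_measurable_cond_exp2])
      show "(\<lambda>\<omega>. (grad (X \<omega>) \<bullet> b) * (grad (V \<omega>) \<bullet> b)) \<in> borel_measurable M"
        by (rule borel_measurable_times[OF borel_measurable_inner[OF gxM borel_measurable_const] borel_measurable_inner[OF gvM borel_measurable_const]])
      show "AE \<omega> in M. (grad (X \<omega>) \<bullet> b) * real_cond_exp M (F t) (\<lambda>\<omega>. G \<omega> \<bullet> b) \<omega> = (grad (X \<omega>) \<bullet> b) * (grad (V \<omega>) \<bullet> b)"
        using g_unbiased[of t b] unfolding defs by eventually_elim simp
    qed
    finally show ?thesis .
  qed
  have E_xG: "(\<integral>\<omega>. grad (X \<omega>) \<bullet> G \<omega> \<partial>M) = (\<integral>\<omega>. grad (X \<omega>) \<bullet> grad (V \<omega>) \<partial>M)"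
  proof -
    have "(\<integral>\<omega>. grad (X \<omega>) \<bullet> G \<omega> \<partial>M) = (\<integral>\<omega>. (\<Sum>b\<in>Basis. (grad (X \<omega>) \<bullet> b) * (G \<omega> \<bullet> b)) \<partial>M)"
      by (subst euclidean_inner) simp
    also have "\<dots> = (\<Sum>b\<in>Basis. \<integral>\<omega>. (grad (X \<omega>) \<bullet> b) * (G \<omega> \<bullet> b) \<partial>M)"
      by (rule Bochner_Integration.integral_sum) (rule i_prod[OF i_gx i_G gxM GM], simp)
    also have "\<dots> = (\<Sum>b\<in>Basis. \<integral>\<omega>. (grad (X \<omega>) \<bullet> b) * (grad (V \<omega>) \<bullet> b) \<partial>M)"
      by (rule sum.cong) (auto simp: comp)
    also have "\<dots> = (\<integral>\<omega>. (\<Sum>b\<in>Basis. (grad (X \<omega>) \<bullet> b) * (grad (V \<omega>) \<bullet> b)) \<partial>M)"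
      by (rule Bochner_Integration.integral_sum[symmetric]) (rule i_prod[OF i_gx i_gv gxM gvM], simp)
    also have "\<dots> = (\<integral>\<omega>. grad (X \<omega>) \<bullet> grad (V \<omega>) \<partial>M)"
      by (subst (2) euclidean_inner) simp
    finally show ?thesis .
  qed
  have E_n: "(\<integral>\<omega>. (norm (G \<omega> - grad (V \<omega>)))\<^sup>2 \<partial>M) \<le> \<sigma>\<^sup>2"
  proof -
    have "(\<integral>\<omega>. (norm (G \<omega> - grad (V \<omega>)))\<^sup>2 \<partial>M) = (\<integral>\<omega>. real_cond_exp M (F t) (\<lambda>\<omega>. (norm (G \<omega> - grad (V \<omega>)))\<^sup>2) \<omega> \<partial>M)"
      by (rule S.real_cond_exp_int(2)[symmetric, OF i_n])
    also have "\<dots> \<le> (\<integral>\<omega>. \<sigma>\<^sup>2 \<partial>M)"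
      by (rule integral_mono_AE[OF S.real_cond_exp_int(1)[OF i_n] P.integrable_const]) (use g_var[of t] in \<open>simp add: defs\<close>)
    also have "\<dots> = \<sigma>\<^sup>2" by (simp add: P.prob_space)
    finally show ?thesis .
  qed
  have E_gv: "(\<integral>\<omega>. grad (X \<omega>) \<bullet> grad (V \<omega>) \<partial>M) \<ge> (\<integral>\<omega>. (norm (grad (X \<omega>)))\<^sup>2 / 2 - L\<^sup>2 * (norm (X \<omega> - V \<omega>))\<^sup>2 / 2 \<partial>M)"
  proof (rule integral_mono[OF Bochner_Integration.integrable_diff i_xv2])
    show "integrable M (\<lambda>\<omega>. (norm (grad (X \<omega>)))\<^sup>2 / 2)" using i_gx by simp
    show "integrable M (\<lambda>\<omega>. L\<^sup>2 * (norm (X \<omega> - V \<omega>))\<^sup>2 / 2)" using i_xv by simp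
  qed (rule p3)
  have iR1': "integrable M (\<lambda>\<omega>. f (X \<omega>) - \<alpha> * (grad (X \<omega>) \<bullet> G \<omega>))"
    by (rule Bochner_Integration.integrable_diff) (use f_int[of t] i_xG in \<open>auto simp: X_def\<close>)
  have iR2': "integrable M (\<lambda>\<omega>. 3 * (norm (G \<omega> - grad (V \<omega>)))\<^sup>2 + 3 * (norm (grad (X \<omega>)))\<^sup>2)"
    by (rule Bochner_Integration.integrable_add) (use i_n i_gx in auto)
  have iR3': "integrable M (\<lambda>\<omega>. 3 * (L\<^sup>2 * (norm (X \<omega> - V \<omega>))\<^sup>2))"
    using i_xv by auto
  have E_main: "(\<integral>\<omega>. f (x (Suc t) \<omega>) \<partial>M) \<le> (\<integral>\<omega>. f (X \<omega>) - \<alpha> * (grad (X \<omega>) \<bullet> G \<omega>) + L * \<alpha>\<^sup>2 / 2 * (3 * (norm (G \<omega> - grad (V \<omega>)))\<^sup>2 + 3 * (norm (grad (X \<omega>)))\<^sup>2 + 3 * (L\<^sup>2 * (norm (X \<omega> - V \<omega>))\<^sup>2)) \<partial>M)"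
  proof (rule integral_mono)
    show "integrable M (\<lambda>\<omega>. f (x (Suc t) \<omega>))" by (rule f_int)
    show "integrable M (\<lambda>\<omega>. f (X \<omega>) - \<alpha> * (grad (X \<omega>) \<bullet> G \<omega>) + L * \<alpha>\<^sup>2 / 2 * (3 * (norm (G \<omega> - grad (V \<omega>)))\<^sup>2 + 3 * (norm (grad (X \<omega>)))\<^sup>2 + 3 * (L\<^sup>2 * (norm (X \<omega> - V \<omega>))\<^sup>2)))"
      using Bochner_Integration.integrable_add[OF iR1' integrable_mult_right[OF Bochner_Integration.integrable_add[OF iR2' iR3']]] .
    fix \<omega> assume w: "\<omega> \<in> space M"
    have "L * \<alpha>\<^sup>2 / 2 * (norm (G \<omega>))\<^sup>2 \<le> L * \<alpha>\<^sup>2 / 2 * (3 * (norm (G \<omega> - grad (V \<omega>)))\<^sup>2 + 3 * (norm (grad (X \<omega>)))\<^sup>2 + 3 * (L\<^sup>2 * (norm (X \<omega> - V \<omega>))\<^sup>2))"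
      by (rule mult_left_mono[OF p2]) (use L_pos in auto)
    then show "f (x (Suc t) \<omega>) \<le> f (X \<omega>) - \<alpha> * (grad (X \<omega>) \<bullet> G \<omega>) + L * \<alpha>\<^sup>2 / 2 * (3 * (norm (G \<omega> - grad (V \<omega>)))\<^sup>2 + 3 * (norm (grad (X \<omega>)))\<^sup>2 + 3 * (L\<^sup>2 * (norm (X \<omega> - V \<omega>))\<^sup>2))"
      using p1[OF w] by linarith
  qed
  define Ef where "Ef = (\<integral>\<omega>. f (X \<omega>) \<partial>M)"
  define EG where "EG = (\<integral>\<omega>. grad (X \<omega>) \<bullet> G \<omega> \<partial>M)"
  define En where "En = (\<integral>\<omega>. (norm (G \<omega> - grad (V \<omega>)))\<^sup>2 \<partial>M)"
  define Egx where "Egx = (\<integral>\<omega>. (norm (grad (X \<omega>)))\<^sup>2 \<partial>M)"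
  define Exv where "Exv = (\<integral>\<omega>. (norm (X \<omega> - V \<omega>))\<^sup>2 \<partial>M)"
  define c where "c = L * \<alpha>\<^sup>2 / 2"
  have iR1: "integrable M (\<lambda>\<omega>. f (X \<omega>) - \<alpha> * (grad (X \<omega>) \<bullet> G \<omega>))"
    by (rule Bochner_Integration.integrable_diff) (use f_int[of t] i_xG in \<open>auto simp: X_def\<close>)
  have iR2: "integrable M (\<lambda>\<omega>. 3 * (norm (G \<omega> - grad (V \<omega>)))\<^sup>2 + 3 * (norm (grad (X \<omega>)))\<^sup>2)"
    by (rule Bochner_Integration.integrable_add) (use i_n i_gx in auto)
  have iR3: "integrable M (\<lambda>\<omega>. 3 * (L\<^sup>2 * (norm (X \<omega> - V \<omega>))\<^sup>2))"
    using i_xv by auto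
  have IntR: "(\<integral>\<omega>. f (X \<omega>) - \<alpha> * (grad (X \<omega>) \<bullet> G \<omega>) + L * \<alpha>\<^sup>2 / 2 * (3 * (norm (G \<omega> - grad (V \<omega>)))\<^sup>2 + 3 * (norm (grad (X \<omega>)))\<^sup>2 + 3 * (L\<^sup>2 * (norm (X \<omega> - V \<omega>))\<^sup>2)) \<partial>M)
     = (Ef - \<alpha> * EG) + c * ((3 * En + 3 * Egx) + 3 * (L\<^sup>2 * Exv))"
  proof -
    have e1: "(\<integral>\<omega>. f (X \<omega>) - \<alpha> * (grad (X \<omega>) \<bullet> G \<omega>) \<partial>M) = Ef - \<alpha> * EG"
      unfolding Ef_def EG_def
      by (subst Bochner_Integration.integral_diff) (use f_int[of t] i_xG in \<open>auto simp: X_def\<close>)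
    have e2: "(\<integral>\<omega>. 3 * (norm (G \<omega> - grad (V \<omega>)))\<^sup>2 + 3 * (norm (grad (X \<omega>)))\<^sup>2 \<partial>M) = 3 * En + 3 * Egx"
      unfolding En_def Egx_def
      by (subst Bochner_Integration.integral_add) (use i_n i_gx in auto)
    have e3: "(\<integral>\<omega>. 3 * (L\<^sup>2 * (norm (X \<omega> - V \<omega>))\<^sup>2) \<partial>M) = 3 * (L\<^sup>2 * Exv)"
      unfolding Exv_def by simp
    have e4: "(\<integral>\<omega>. (3 * (norm (G \<omega> - grad (V \<omega>)))\<^sup>2 + 3 * (norm (grad (X \<omega>)))\<^sup>2) + 3 * (L\<^sup>2 * (norm (X \<omega> - V \<omega>))\<^sup>2) \<partial>M) = (3 * En + 3 * Egx) + 3 * (L\<^sup>2 * Exv)"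
      by (subst Bochner_Integration.integral_add[OF iR2 iR3]) (simp only: e2 e3)
    have iR4: "integrable M (\<lambda>\<omega>. c * ((3 * (norm (G \<omega> - grad (V \<omega>)))\<^sup>2 + 3 * (norm (grad (X \<omega>)))\<^sup>2) + 3 * (L\<^sup>2 * (norm (X \<omega> - V \<omega>))\<^sup>2)))"
      by (rule integrable_mult_right, rule Bochner_Integration.integrable_add[OF iR2 iR3])
    have "(\<integral>\<omega>. (f (X \<omega>) - \<alpha> * (grad (X \<omega>) \<bullet> G \<omega>)) + c * ((3 * (norm (G \<omega> - grad (V \<omega>)))\<^sup>2 + 3 * (norm (grad (X \<omega>)))\<^sup>2) + 3 * (L\<^sup>2 * (norm (X \<omega> - V \<omega>))\<^sup>2)) \<partial>M)
       = (Ef - \<alpha> * EG) + c * ((3 * En + 3 * Egx) + 3 * (L\<^sup>2 * Exv))"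
      by (subst Bochner_Integration.integral_add[OF iR1 iR4]) (simp only: e1 e4 integral_mult_right_zero)
    then show ?thesis unfolding c_def by (simp only: add.assoc)
  qed
  have A: "(\<integral>\<omega>. f (x (Suc t) \<omega>) \<partial>M) \<le> (Ef - \<alpha> * EG) + c * ((3 * En + 3 * Egx) + 3 * (L\<^sup>2 * Exv))"
    using E_main unfolding IntR .
  have Bq: "EG \<ge> Egx / 2 - L\<^sup>2 * Exv / 2"
  proof -
    have "(\<integral>\<omega>. (norm (grad (X \<omega>)))\<^sup>2 / 2 - L\<^sup>2 * (norm (X \<omega> - V \<omega>))\<^sup>2 / 2 \<partial>M) = Egx / 2 - L\<^sup>2 * Exv / 2"
      unfolding Egx_def Exv_def
      by (subst Bochner_Integration.integral_diff) (use i_gx i_xv in auto)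
    thus ?thesis using E_gv E_xG unfolding EG_def by linarith
  qed
  have Cn: "En \<le> \<sigma>\<^sup>2" using E_n unfolding En_def .
  have Dx: "Exv \<le> \<alpha>\<^sup>2 * B\<^sup>2" using elastic[of t] unfolding Exv_def defs .
  have Eg: "Egx \<ge> 0" unfolding Egx_def by simp
  have c_pos: "c \<ge> 0" unfolding c_def using L_pos by simp
  have La: "3 * c \<le> \<alpha> / 4"
  proof -
    have "L * \<alpha> \<le> 1 / 6" using alpha_le L_pos by (simp add: field_simps)
    hence "L * \<alpha> * \<alpha> \<le> \<alpha> / 6" using alpha_pos by (simp add: mult_right_mono)
    thus ?thesis unfolding c_def by (simp add: power2_eq_square algebra_simps)
  qed
  have s1: "\<alpha> * EG \<ge> \<alpha> * (Egx / 2 - L\<^sup>2 * Exv / 2)" using Bq alpha_pos by (simp add: mult_left_mono)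
  have s2: "c * En \<le> c * \<sigma>\<^sup>2" using Cn c_pos by (simp add: mult_left_mono)
  have s3: "(\<alpha> * L\<^sup>2) * Exv \<le> (\<alpha> * L\<^sup>2) * (\<alpha>\<^sup>2 * B\<^sup>2)"
    using Dx alpha_pos by (intro mult_left_mono) auto
  have s3': "(c * L\<^sup>2) * Exv \<le> (c * L\<^sup>2) * (\<alpha>\<^sup>2 * B\<^sup>2)"
    using Dx c_pos by (intro mult_left_mono) auto
  have s4: "(3 * c) * Egx \<le> (\<alpha> / 4) * Egx" using La Eg by (rule mult_right_mono)
  have q1: "c * ((3 * En + 3 * Egx) + 3 * (L\<^sup>2 * Exv)) = 3 * (c * En) + (3 * c) * Egx + 3 * ((c * L\<^sup>2) * Exv)"
    by (simp add: algebra_simps)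
  have q2: "\<alpha> * (Egx / 2 - L\<^sup>2 * Exv / 2) = \<alpha> / 2 * Egx - (\<alpha> * L\<^sup>2) * Exv / 2"
    by (simp add: algebra_simps)
  have q3: "(\<alpha> * L\<^sup>2) * (\<alpha>\<^sup>2 * B\<^sup>2) = \<alpha> ^ 3 * B\<^sup>2 * L\<^sup>2" by (simp add: power2_eq_square power3_eq_cube)
  have q4: "3 * (c * \<sigma>\<^sup>2) = 3 * L * \<alpha>\<^sup>2 * \<sigma>\<^sup>2 / 2" unfolding c_def by simp
  have q5: "3 * ((c * L\<^sup>2) * (\<alpha>\<^sup>2 * B\<^sup>2)) = 3 * L ^ 3 * \<alpha> ^ 4 * B\<^sup>2 / 2"
    unfolding c_def by (simp add: power2_eq_square power3_eq_cube power4_eq_xxxx)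
  have q6: "\<alpha> / 2 * Egx = \<alpha> / 4 * Egx + \<alpha> / 4 * Egx" by simp
  have "(\<integral>\<omega>. f (x (Suc t) \<omega>) \<partial>M) \<le> Ef - \<alpha> / 4 * Egx + \<alpha> ^ 3 * B\<^sup>2 * L\<^sup>2 / 2 + 3 * L * \<alpha>\<^sup>2 * \<sigma>\<^sup>2 / 2 + 3 * L ^ 3 * \<alpha> ^ 4 * B\<^sup>2 / 2"
    using A s1 s2 s3 s3' s4 q1 q2 q3 q4 q5 q6 by linarith
  then show ?thesis unfolding Ef_def Egx_def X_def .
qed

end
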